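(* Let $\psi$ be a CNF formula with only positive literals, with clauses $C_1,\dots,C_m$ each consisting of three distinct variables, and variables $x_1,\dots,x_p$, in which every variable appears in at least $3$ clauses. Let $G$ be the graph constructed as follows: (1) for each variable $x_i$ create a cycle $D_i$ whose number of vertices equals the number of clauses containing $x_i$, and, for each clause containing $x_i$, designate a distinct vertex of $D_i$ as corresponding to that clause; (2) add a vertex $a$ adjacent to every vertex of all cycles $D_1,\dots,D_p$; (3) subdivide every edge of the cycles and every edge incident to $a$ exactly twice (replacing it by a path with three edges); (4) for each clause $C_i=\{x_j,x_k,x_\ell\}$ add a triangle on new vertices $u_{ij},u_{ik},u_{i\ell}$ and make $u_{ij}$ adjacent to the vertex of $D_j$ corresponding to $C_i$, $u_{ik}$ adjacent to the vertex of $D_k$ corresponding to $C_i$, and $u_{i\ell}$ adjacent to the vertex of $D_\ell$ corresponding to $C_i$. If $\psi$ has an assignment in which every clause contains exactly one true variable, then $G$ has a $1$-shallow topological minor of density $\frac{5m}{2m+1}$.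
   Context: A graph $H$ is a $1$-shallow topological minor of $G$ if some graph obtained from $H$ by subdividing each edge at most twice is isomorphic to a subgraph of $G$. The density of $H$ is $\|H\|/|H|$ (number of edges divided by number of vertices). *)

theory Defs
  imports Main "HOL.Real"
begin

type_synonym 'a graph = "'a set \<times> 'a set set"

definition verts :: "'a graph \<Rightarrow> 'a set" where "verts G = fst G"
definition edges :: "'a graph \<Rightarrow> 'a set set" where "edges G = snd G"

definition simple_graph :: "'a graph \<Rightarrow> bool" where
  "simple_graph G \<longleftrightarrow> finite (verts G) \<and>
     (\<forall>e\<in>edges G. \<exists>u v. e = {u, v} \<and> u \<noteq> v \<and> u \<in> verts G \<and> v \<in> verts G)"

definition density :: "'a graph \<Rightarrow> real" where
  "density G = real (card (edges G)) / real (card (verts G))"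

definition is_path :: "'a graph \<Rightarrow> 'a list \<Rightarrow> bool" where
  "is_path G P \<longleftrightarrow> P \<noteq> [] \<and> distinct P \<and> set P \<subseteq> verts G \<and>
     (\<forall>k. Suc k < length P \<longrightarrow> {P ! k, P ! Suc k} \<in> edges G)"

definition inner :: "'a list \<Rightarrow> 'a set" where
  "inner P = set (butlast (tl P))"

text \<open>H is a 1-shallow topological minor of G: some graph obtained from H by subdividing
  each edge at most twice is isomorphic to a subgraph of G.\<close>
definition shallow_top_minor1 :: "'b graph \<Rightarrow> 'a graph \<Rightarrow> bool" where
  "shallow_top_minor1 H G \<longleftrightarrow> simple_graph H \<and>
     (\<exists>(f :: 'b \<Rightarrow> 'a) (P :: 'b set \<Rightarrow> 'a list).
        inj_on f (verts H) \<and> f ` verts H \<subseteq> verts G \<and>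
        (\<forall>e\<in>edges H. is_path G (P e) \<and> 2 \<le> length (P e) \<and> length (P e) \<le> 4 \<and>
            (\<exists>u v. e = {u, v} \<and> hd (P e) = f u \<and> last (P e) = f v) \<and>
            inner (P e) \<inter> f ` verts H = {}) \<and>
        (\<forall>e\<in>edges H. \<forall>e'\<in>edges H. e \<noteq> e' \<longrightarrow> inner (P e) \<inter> inner (P e') = {}))"

text \<open>The CNF formula: clauses 0..<m, variables 0..<p, clause i is the set C i of
  (positive) variables it contains.\<close>

definition occ :: "nat \<Rightarrow> (nat \<Rightarrow> nat set) \<Rightarrow> nat \<Rightarrow> nat set" where
  "occ m C j = {i. i < m \<and> j \<in> C i}"

text \<open>nxt j is a cyclic arrangement of the clauses containing x_j: the cycle D_j has one
  vertex per clause containing x_j, and clause i is followed on D_j by clause nxt j i.\<close>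
definition cyclic_order :: "nat \<Rightarrow> nat \<Rightarrow> (nat \<Rightarrow> nat set) \<Rightarrow> (nat \<Rightarrow> nat \<Rightarrow> nat) \<Rightarrow> bool" where
  "cyclic_order m p C nxt \<longleftrightarrow> (\<forall>j<p. bij_betw (nxt j) (occ m C j) (occ m C j) \<and>
      (\<forall>i\<in>occ m C j. \<forall>i'\<in>occ m C j. \<exists>k. (nxt j ^^ k) i = i'))"

datatype vtx =
    Cyc nat nat        (* Cyc i j: vertex of D_j corresponding to clause C_i *)
  | Apex
  | SubC nat nat nat   (* SubC i j k: k-th subdivision vertex of the cycle edge of D_j leaving Cyc i j *)
  | SubA nat nat nat   (* SubA i j k: k-th subdivision vertex of the edge a -- Cyc i j *)
  | U nat nat

definition constr_graph :: "nat \<Rightarrow> (nat \<Rightarrow> nat set) \<Rightarrow> (nat \<Rightarrow> nat \<Rightarrow> nat) \<Rightarrow> vtx graph" where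
  "constr_graph m C nxt =
    ({Apex} \<union> {Cyc i j | i j. i < m \<and> j \<in> C i}
       \<union> {SubC i j k | i j k. i < m \<and> j \<in> C i \<and> k < 2}
       \<union> {SubA i j k | i j k. i < m \<and> j \<in> C i \<and> k < 2}
       \<union> {U i j | i j. i < m \<and> j \<in> C i},
     {{Cyc i j, SubC i j 0} | i j. i < m \<and> j \<in> C i}
       \<union> {{SubC i j 0, SubC i j 1} | i j. i < m \<and> j \<in> C i}
       \<union> {{SubC i j 1, Cyc (nxt j i) j} | i j. i < m \<and> j \<in> C i}
       \<union> {{Apex, SubA i j 0} | i j. i < m \<and> j \<in> C i}
       \<union> {{SubA i j 0, SubA i j 1} | i j. i < m \<and> j \<in> C i}
       \<union> {{SubA i j 1, Cyc i j} | i j. i < m \<and> j \<in> C i}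
       \<union> {{U i j, U i k} | i j k. i < m \<and> j \<in> C i \<and> k \<in> C i \<and> j \<noteq> k}
       \<union> {{U i j, Cyc i j} | i j. i < m \<and> j \<in> C i})"

end

theory Submission
  imports Defs
begin

lemma path4:
  assumes "distinct [a,b,c,d]" "{a,b,c,d} \<subseteq> verts G" "{a,b} \<in> edges G"
    "{b,c} \<in> edges G" "{c,d} \<in> edges G"
  shows "is_path G [a,b,c,d]"
  unfolding is_path_def
proof (intro conjI allI impI)
  fix k assume "Suc k < length [a,b,c,d]"
  hence "k = 0 \<or> k = 1 \<or> k = 2" by auto
  thus "{[a,b,c,d] ! k, [a,b,c,d] ! Suc k} \<in> edges G" using assms by auto
qed (use assms in auto)

lemma cyc_facts:
  assumes cyc: "cyclic_order m p C nxt" and j: "j<p" and occ3: "card (occ m C j) \<ge> 3"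
    and i: "i \<in> occ m C j"
  shows "nxt j i \<in> occ m C j" "nxt j i \<noteq> i" "nxt j (nxt j i) \<noteq> i"
proof -
  have bij: "bij_betw (nxt j) (occ m C j) (occ m C j)"
    and reach: "\<forall>i'\<in>occ m C j. \<exists>k. (nxt j ^^ k) i = i'"
    using cyc j i unfolding cyclic_order_def by auto
  show "nxt j i \<in> occ m C j" using bij i bij_betwE by blast
  show "nxt j i \<noteq> i"
  proof
    assume h: "nxt j i = i"
    have it: "(nxt j ^^ k) i = i" for k by (induction k) (auto simp: h)
    have "occ m C j \<subseteq> {i}"
    proof
      fix x assume "x \<in> occ m C j"
      then obtain k where "(nxt j ^^ k) i = x" using reach by blast
      thus "x \<in> {i}" using it[of k] by simp
    qed
    hence "card (occ m C j) \<le> 1" using card_mono[of "{i}" "occ m C j"] by simp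
    thus False using occ3 by simp
  qed
  show "nxt j (nxt j i) \<noteq> i"
  proof
    assume h: "nxt j (nxt j i) = i"
    have it: "(nxt j ^^ k) i \<in> {i, nxt j i}" for k by (induction k) (auto simp: h)
    have sub: "occ m C j \<subseteq> {i, nxt j i}"
    proof
      fix x assume "x \<in> occ m C j"
      then obtain k where "(nxt j ^^ k) i = x" using reach by blast
      thus "x \<in> {i, nxt j i}" using it[of k] by simp
    qed
    have "card {i, nxt j i} \<le> 2" by (simp add: card_insert_if)
    hence "card (occ m C j) \<le> 2" using card_mono[OF _ sub] by simp
    thus False using occ3 by simp
  qed
qed

theorem lemma4:
  fixes m p :: nat and C :: "nat \<Rightarrow> nat set" and nxt :: "nat \<Rightarrow> nat \<Rightarrow> nat"
  assumes clauses: "\<forall>i<m. C i \<subseteq> {..<p} \<and> card (C i) = 3"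
    and occurs: "\<forall>j<p. card (occ m C j) \<ge> 3"
    and cyc: "cyclic_order m p C nxt"
    and x1sat: "\<exists>T \<subseteq> {..<p}. \<forall>i<m. card (C i \<inter> T) = 1"
  shows "\<exists>H :: vtx graph. shallow_top_minor1 H (constr_graph m C nxt) \<and>
           density H = real (5 * m) / real (2 * m + 1)"
proof -
  obtain T where T: "\<forall>i<m. card (C i \<inter> T) = 1" using x1sat by blast
  have finC: "finite (C i)" if "i<m" for i using clauses that card.infinite by fastforce
  have card2: "card (C i - T) = 2" if "i<m" for i
    using card_Diff_subset_Int[of "C i" T] finC[OF that] T clauses that by auto
  define lo where "lo i = Min (C i - T)" for i
  define hi where "hi i = Max (C i - T)" for i
  have lohi: "lo i \<in> C i - T \<and> hi i \<in> C i - T \<and> lo i < hi i" if im: "i<m" for i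
  proof -
    obtain a b where ab: "C i - T = {a,b}" "a \<noteq> b" using card2[OF im] card_2_iff by metis
    show ?thesis unfolding lo_def hi_def ab using ab(2) by (auto simp: min_def max_def)
  qed
  define F where "F = Sigma {..<m} (\<lambda>i. C i - T)"
  have finF: "finite F" unfolding F_def using finC by auto
  have cardF: "card F = 2 * m" unfolding F_def
    by (subst card_SigmaI) (use finC card2 in auto)
  have Fo: "j < p \<and> i \<in> occ m C j" if "(i,j) \<in> F" for i j
    using that clauses unfolding F_def occ_def by auto
  have Fn: "(nxt j i, j) \<in> F \<and> nxt j i \<noteq> i \<and> nxt j (nxt j i) \<noteq> i" if "(i,j) \<in> F" for i j
  proof -
    have "j < p" "i \<in> occ m C j" using Fo[OF that] by auto
    note cf = cyc_facts[OF cyc this(1) _ this(2)]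
    have o3: "card (occ m C j) \<ge> 3" using occurs \<open>j<p\<close> by auto
    show ?thesis using cf[OF o3] that unfolding F_def occ_def by auto
  qed
  define LA where "LA = (\<lambda>(i,j). [Apex, SubA i j 0, SubA i j 1, Cyc i j]) ` F"
  define LC where "LC = (\<lambda>(i,j). [Cyc i j, SubC i j 0, SubC i j 1, Cyc (nxt j i) j]) ` F"
  define LT where "LT = (\<lambda>i. [Cyc i (lo i), U i (lo i), U i (hi i), Cyc i (hi i)]) ` {..<m}"
  define Ls where "Ls = LA \<union> LT \<union> LC"
  define V where "V = insert Apex ((\<lambda>(i,j). Cyc i j) ` F)"
  define E where "E = (\<lambda>L. {hd L, last L}) ` Ls"
  define G where "G = constr_graph m C nxt"
  have LT_F: "(i, lo i) \<in> F \<and> (i, hi i) \<in> F" if "i < m" for i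
    using lohi[OF that] that unfolding F_def by auto
  have Lprops: "is_path G L \<and> length L = 4 \<and> hd L \<in> V \<and> last L \<in> V \<and> hd L \<noteq> last L
      \<and> inner L \<inter> V = {}" if "L \<in> Ls" for L
  proof -
    consider (A) i j where "(i,j) \<in> F" "L = [Apex, SubA i j 0, SubA i j 1, Cyc i j]"
      | (T) i where "i < m" "L = [Cyc i (lo i), U i (lo i), U i (hi i), Cyc i (hi i)]"
      | (C) i j where "(i,j) \<in> F" "L = [Cyc i j, SubC i j 0, SubC i j 1, Cyc (nxt j i) j]"
      using \<open>L \<in> Ls\<close> unfolding Ls_def LA_def LT_def LC_def by auto
    thus ?thesis
    proof cases
      case A
      hence ij: "i < m" "j \<in> C i" using A unfolding F_def by auto
      have "is_path G L" unfolding A(2) G_def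
        by (rule path4) (use ij in \<open>auto simp: constr_graph_def verts_def edges_def\<close>)
      thus ?thesis using A unfolding V_def inner_def by auto
    next
      case T
      have ij: "lo i \<in> C i" "hi i \<in> C i" "lo i \<noteq> hi i" using lohi[OF T(1)] by auto
      have "is_path G L" unfolding T(2) G_def
        apply (rule path4)
        using ij T(1) apply (auto simp: constr_graph_def verts_def edges_def)
        done
      thus ?thesis using T LT_F[OF T(1)] ij unfolding V_def inner_def by auto
    next
      case C
      hence ij: "i < m" "j \<in> C i" using C unfolding F_def by auto
      have n: "nxt j i < m" "j \<in> C (nxt j i)" "nxt j i \<noteq> i" using Fn[OF C(1)] unfolding F_def by auto
      have "is_path G L" unfolding C(2) G_def
        apply (rule path4)
        using ij n apply (auto simp: constr_graph_def verts_def edges_def)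
        done
      thus ?thesis using C Fn[OF C(1)] n unfolding V_def inner_def by auto
    qed
  qed
  have cases3: "(\<exists>i j. (i,j) \<in> F \<and> L = [Apex, SubA i j 0, SubA i j 1, Cyc i j])
      \<or> (\<exists>i. i < m \<and> L = [Cyc i (lo i), U i (lo i), U i (hi i), Cyc i (hi i)])
      \<or> (\<exists>i j. (i,j) \<in> F \<and> L = [Cyc i j, SubC i j 0, SubC i j 1, Cyc (nxt j i) j])"
    if "L \<in> Ls" for L
    using that unfolding Ls_def LA_def LT_def LC_def by auto
  have disj: "L = L'" if "L \<in> Ls" "L' \<in> Ls" "inner L \<inter> inner L' \<noteq> {}" for L L'
    using cases3[OF that(1)] cases3[OF that(2)] that(3) unfolding inner_def
    by (elim disjE exE conjE) auto
  have injE: "inj_on (\<lambda>L. {hd L, last L}) Ls"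
  proof (rule inj_onI)
    fix L L' assume L: "L \<in> Ls" "L' \<in> Ls" "{hd L, last L} = {hd L', last L'}"
    show "L = L'"
      using cases3[OF L(1)] cases3[OF L(2)] L(3)
    proof (elim disjE exE conjE)
      fix i j i' j' assume "(i,j) \<in> F" "(i',j') \<in> F"
        and e: "L = [Cyc i j, SubC i j 0, SubC i j 1, Cyc (nxt j i) j]"
        "L' = [Cyc i' j', SubC i' j' 0, SubC i' j' 1, Cyc (nxt j' i') j']"
        "{hd L, last L} = {hd L', last L'}"
      thus "L = L'" using Fn[of i j] Fn[of i' j'] by (auto simp: doubleton_eq_iff)
    next
      fix i i' j assume "i < m" "(i',j) \<in> F"
        "L = [Cyc i (lo i), U i (lo i), U i (hi i), Cyc i (hi i)]"
        "L' = [Cyc i' j, SubC i' j 0, SubC i' j 1, Cyc (nxt j i') j]"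
        "{hd L, last L} = {hd L', last L'}"
      thus "L = L'" using Fn[of i' j] lohi[of i] by (auto simp: doubleton_eq_iff)
    next
      fix i i' j assume "i < m" "(i',j) \<in> F"
        "L' = [Cyc i (lo i), U i (lo i), U i (hi i), Cyc i (hi i)]"
        "L = [Cyc i' j, SubC i' j 0, SubC i' j 1, Cyc (nxt j i') j]"
        "{hd L, last L} = {hd L', last L'}"
      thus "L = L'" using Fn[of i' j] lohi[of i] by (auto simp: doubleton_eq_iff)
    next
      fix i i' assume "i < m" "i' < m"
        "L' = [Cyc i' (lo i'), U i' (lo i'), U i' (hi i'), Cyc i' (hi i')]"
        "L = [Cyc i (lo i), U i (lo i), U i (hi i), Cyc i (hi i)]"
        "{hd L, last L} = {hd L', last L'}"
      thus "L = L'" by (auto simp: doubleton_eq_iff)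
    qed (auto simp: doubleton_eq_iff)
  qed
  have cardLs: "card Ls = 5 * m"
  proof -
    have "card LA = card F" unfolding LA_def by (rule card_image) (auto simp: inj_on_def)
    moreover have "card LC = card F" unfolding LC_def by (rule card_image) (auto simp: inj_on_def)
    moreover have "card LT = m" unfolding LT_def by (subst card_image) (auto simp: inj_on_def)
    moreover have "finite LA" "finite LT" "finite LC" using finF unfolding LA_def LT_def LC_def by auto
    moreover have "LA \<inter> LT = {}" "(LA \<union> LT) \<inter> LC = {}" unfolding LA_def LT_def LC_def by auto
    ultimately show ?thesis unfolding Ls_def using cardF
      by (simp add: card_Un_disjoint)
  qed
  have cardV: "card V = 2 * m + 1"
  proof -
    have "card ((\<lambda>(i,j). Cyc i j) ` F) = card F" by (rule card_image) (auto simp: inj_on_def)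
    thus ?thesis unfolding V_def using finF cardF by (subst card_insert_disjoint) auto
  qed
  have cardE: "card E = 5 * m" unfolding E_def using card_image[OF injE] cardLs by simp
  define H where "H = (V, E)"
  define P where "P e = (SOME L. L \<in> Ls \<and> {hd L, last L} = e)" for e
  have Pe: "P e \<in> Ls \<and> {hd (P e), last (P e)} = e" if "e \<in> E" for e
    unfolding P_def by (rule someI_ex) (use that E_def in auto)
  have finV: "finite V" unfolding V_def using finF by auto
  have "shallow_top_minor1 H G"
    unfolding shallow_top_minor1_def
  proof (intro conjI exI[of _ id] exI[of _ P])
    show "simple_graph H" unfolding simple_graph_def H_def verts_def edges_def
      using finV Lprops unfolding E_def by fastforce
    show "inj_on id (verts H)" by simp
    show "id ` verts H \<subseteq> verts G"
      unfolding H_def verts_def G_def constr_graph_def V_def F_def by auto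
    show "\<forall>e\<in>edges H. is_path G (P e) \<and> 2 \<le> length (P e) \<and> length (P e) \<le> 4 \<and>
            (\<exists>u v. e = {u, v} \<and> hd (P e) = id u \<and> last (P e) = id v) \<and>
            inner (P e) \<inter> id ` verts H = {}"
    proof
      fix e assume "e \<in> edges H"
      hence e: "e \<in> E" unfolding H_def edges_def by simp
      show "is_path G (P e) \<and> 2 \<le> length (P e) \<and> length (P e) \<le> 4 \<and>
            (\<exists>u v. e = {u, v} \<and> hd (P e) = id u \<and> last (P e) = id v) \<and>
            inner (P e) \<inter> id ` verts H = {}"
        using Pe[OF e] Lprops[of "P e"] unfolding H_def verts_def by auto
    qed
    show "\<forall>e\<in>edges H. \<forall>e'\<in>edges H. e \<noteq> e' \<longrightarrow> inner (P e) \<inter> inner (P e') = {}"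
      unfolding H_def edges_def using Pe disj by (metis snd_conv)
  qed
  moreover have "density H = real (5 * m) / real (2 * m + 1)"
    unfolding density_def H_def verts_def edges_def using cardE cardV by simp
  ultimately show ?thesis unfolding G_def by blast
qed

end
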